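(* Let $P_0$ and $R_0$ be non-isomorphic posets, each of size $m$, and let $i>m$. Then $D_{m+i+1}(P_iR_i)$ is a node of covtree consisting of $k=C(P_0R_0)+\lceil (i-m)/2\rceil$ posets of size $n=m+i+1$, and the smallest witness of this node has size $|P_iR_i|=2m+2i$. Consequently, for any constant $c$, $|P_iR_i|>n+k+c$ whenever $i-\lceil (i-m)/2\rceil>1+C(P_0R_0)-m+c$.
   Context: For $i\ge 0$, $P_i$ (resp. $R_i$) is obtained by placing $P_0$ (resp. $R_0$) above a chain of $i$ elements, and $P_iR_i$ is their disjoint union. A downset is a downward-closed subset; $D(P)$ is the set of non-empty downsets of $P$ up to isomorphism and $D_n(P)$ those of size $n$. $C(P_0R_0):=|D(P_0)|+|D(R_0)|-|D(P_0)\cap D(R_0)|$. A poset $Q$ is a witness of a set $\Gamma_n$ of unlabelled posets of size $n$ if $D_n(Q)=\Gamma_n$; a node of covtree is such a set $\Gamma_n$ that has at least one witness. *)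

theory Defs
  imports Complex_Main
begin

text \<open>Finite posets are represented concretely with carrier a finite set of naturals
  and order relation a set of pairs (reflexive on the carrier).  Unlabelled posets are
  isomorphism classes of such posets.\<close>

type_synonym npos = "nat set \<times> (nat \<times> nat) set"

definition is_poset :: "npos \<Rightarrow> bool" where
  "is_poset P \<longleftrightarrow> finite (fst P) \<and> snd P \<subseteq> fst P \<times> fst P \<and>
     refl_on (fst P) (snd P) \<and> antisym (snd P) \<and> trans (snd P)"

definition psize :: "npos \<Rightarrow> nat" where
  "psize P = card (fst P)"

definition pos_iso :: "npos \<Rightarrow> npos \<Rightarrow> bool" where
  "pos_iso P Q \<longleftrightarrow> (\<exists>f. bij_betw f (fst P) (fst Q) \<and>
     (\<forall>x\<in>fst P. \<forall>y\<in>fst P. (x, y) \<in> snd P \<longleftrightarrow> (f x, f y) \<in> snd Q))"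

definition iso_class :: "npos \<Rightarrow> npos set" where
  "iso_class P = {Q. is_poset Q \<and> pos_iso P Q}"

definition is_downset :: "npos \<Rightarrow> nat set \<Rightarrow> bool" where
  "is_downset P S \<longleftrightarrow> S \<subseteq> fst P \<and> (\<forall>x\<in>S. \<forall>y\<in>fst P. (y, x) \<in> snd P \<longrightarrow> y \<in> S)"

definition induced :: "npos \<Rightarrow> nat set \<Rightarrow> npos" where
  "induced P S = (S, snd P \<inter> (S \<times> S))"

definition Dsets :: "npos \<Rightarrow> npos set set" where
  "Dsets P = {iso_class (induced P S) | S. is_downset P S \<and> S \<noteq> {}}"

definition Dn :: "nat \<Rightarrow> npos \<Rightarrow> npos set set" where
  "Dn n P = {iso_class (induced P S) | S. is_downset P S \<and> S \<noteq> {} \<and> card S = n}"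

definition map_pos :: "(nat \<Rightarrow> nat) \<Rightarrow> npos \<Rightarrow> npos" where
  "map_pos f P = (f ` fst P, (\<lambda>(x, y). (f x, f y)) ` snd P)"

definition chain :: "nat \<Rightarrow> npos" where
  "chain i = ({0..<i}, {(a, b). a \<le> b \<and> b < i})"

text \<open>P_i: P placed above a chain of i elements (every element of P lies above every
  chain element).  Chain elements are encoded as even, P's elements as odd numbers.\<close>
definition above_chain :: "npos \<Rightarrow> nat \<Rightarrow> npos" where
  "above_chain P i =
    (let C = map_pos (\<lambda>x. 2 * x) (chain i); Q = map_pos (\<lambda>x. 2 * x + 1) P
     in (fst C \<union> fst Q, snd C \<union> snd Q \<union> (fst C \<times> fst Q)))"

definition disj_union :: "npos \<Rightarrow> npos \<Rightarrow> npos" where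
  "disj_union P Q =
    (let P' = map_pos (\<lambda>x. 2 * x) P; Q' = map_pos (\<lambda>x. 2 * x + 1) Q
     in (fst P' \<union> fst Q', snd P' \<union> snd Q'))"

definition Cconst :: "npos \<Rightarrow> npos \<Rightarrow> nat" where
  "Cconst P R = card (Dsets P) + card (Dsets R) - card (Dsets P \<inter> Dsets R)"

definition is_witness :: "nat \<Rightarrow> npos set set \<Rightarrow> npos \<Rightarrow> bool" where
  "is_witness n \<Gamma> Q \<longleftrightarrow> is_poset Q \<and> Dn n Q = \<Gamma>"

definition is_covtree_node :: "nat \<Rightarrow> npos set set \<Rightarrow> bool" where
  "is_covtree_node n \<Gamma> \<longleftrightarrow> (\<exists>Q. is_witness n \<Gamma> Q)"

end

theory Submission
  imports Defs
begin


lemma pos_iso_refl: "pos_iso P P"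
  unfolding pos_iso_def by (rule exI[of _ id]) auto

lemma pos_iso_sym: assumes "pos_iso P Q" shows "pos_iso Q P"
proof -
  obtain f where f: "bij_betw f (fst P) (fst Q)"
    "\<forall>x\<in>fst P. \<forall>y\<in>fst P. (x, y) \<in> snd P \<longleftrightarrow> (f x, f y) \<in> snd Q"
    using assms unfolding pos_iso_def by blast
  let ?g = "the_inv_into (fst P) f"
  have g: "bij_betw ?g (fst Q) (fst P)" using f(1) by (rule bij_betw_the_inv_into)
  have "\<forall>x\<in>fst Q. \<forall>y\<in>fst Q. (x, y) \<in> snd Q \<longleftrightarrow> (?g x, ?g y) \<in> snd P"
  proof (intro ballI)
    fix x y assume xy: "x \<in> fst Q" "y \<in> fst Q"
    have "?g x \<in> fst P" "?g y \<in> fst P" using g xy by (auto dest: bij_betwE)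
    moreover have "f (?g x) = x" "f (?g y) = y" using f(1) xy
      by (auto intro: f_the_inv_into_f_bij_betw)
    ultimately show "(x, y) \<in> snd Q \<longleftrightarrow> (?g x, ?g y) \<in> snd P" using f(2) by metis
  qed
  then show ?thesis using g unfolding pos_iso_def by blast
qed

lemma pos_iso_trans: assumes "pos_iso P Q" "pos_iso Q R" shows "pos_iso P R"
proof -
  obtain f where f: "bij_betw f (fst P) (fst Q)"
    "\<forall>x\<in>fst P. \<forall>y\<in>fst P. (x, y) \<in> snd P \<longleftrightarrow> (f x, f y) \<in> snd Q"
    using assms unfolding pos_iso_def by blast
  obtain g where g: "bij_betw g (fst Q) (fst R)"
    "\<forall>x\<in>fst Q. \<forall>y\<in>fst Q. (x, y) \<in> snd Q \<longleftrightarrow> (g x, g y) \<in> snd R"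
    using assms unfolding pos_iso_def by blast
  have "bij_betw (g \<circ> f) (fst P) (fst R)" using f g by (metis bij_betw_trans)
  moreover have "\<forall>x\<in>fst P. \<forall>y\<in>fst P. (x, y) \<in> snd P \<longleftrightarrow> ((g \<circ> f) x, (g \<circ> f) y) \<in> snd R"
    using f g by (auto dest: bij_betwE)
  ultimately show ?thesis unfolding pos_iso_def by blast
qed

lemma iso_class_eq: assumes "pos_iso P Q" shows "iso_class P = iso_class Q"
  unfolding iso_class_def using assms pos_iso_sym pos_iso_trans by blast

lemma in_iso_class: "is_poset P \<Longrightarrow> P \<in> iso_class P"
  unfolding iso_class_def using pos_iso_refl by blast

lemma iso_class_eqD: assumes "iso_class P = iso_class Q" "is_poset Q" shows "pos_iso P Q"
  using assms in_iso_class unfolding iso_class_def by blast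

lemma induced_poset: assumes "is_poset P" "S \<subseteq> fst P" shows "is_poset (induced P S)"
  using assms finite_subset unfolding is_poset_def induced_def refl_on_def antisym_def trans_def
  by auto

lemma psize_iso: "pos_iso P Q \<Longrightarrow> psize P = psize Q"
  unfolding pos_iso_def psize_def by (auto intro: bij_betw_same_card)




datatype elt = C bool nat | E bool nat

fun enc :: "elt \<Rightarrow> nat" where
  "enc (C s j) = 4 * j + (if s then 1 else 0)"
| "enc (E s p) = 4 * p + 2 + (if s then 1 else 0)"

lemma m4_ne[simp]: fixes a b :: nat shows
  "4 * a \<noteq> Suc (4 * b)"
  "4 * a \<noteq> 4 * b + 1"
  "4 * a \<noteq> Suc (Suc (4 * b))"
  "4 * a \<noteq> 4 * b + 2"
  "4 * a \<noteq> Suc (Suc (Suc (4 * b)))"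
  "4 * a \<noteq> 4 * b + 3"
  "Suc (4 * a) \<noteq> 4 * b"
  "4 * a + 1 \<noteq> 4 * b"
  "Suc (4 * a) \<noteq> Suc (Suc (4 * b))"
  "Suc (4 * a) \<noteq> 4 * b + 2"
  "4 * a + 1 \<noteq> Suc (Suc (4 * b))"
  "4 * a + 1 \<noteq> 4 * b + 2"
  "Suc (4 * a) \<noteq> Suc (Suc (Suc (4 * b)))"
  "Suc (4 * a) \<noteq> 4 * b + 3"
  "4 * a + 1 \<noteq> Suc (Suc (Suc (4 * b)))"
  "4 * a + 1 \<noteq> 4 * b + 3"
  "Suc (Suc (4 * a)) \<noteq> 4 * b"
  "4 * a + 2 \<noteq> 4 * b"
  "Suc (Suc (4 * a)) \<noteq> Suc (4 * b)"
  "Suc (Suc (4 * a)) \<noteq> 4 * b + 1"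
  "4 * a + 2 \<noteq> Suc (4 * b)"
  "4 * a + 2 \<noteq> 4 * b + 1"
  "Suc (Suc (4 * a)) \<noteq> Suc (Suc (Suc (4 * b)))"
  "Suc (Suc (4 * a)) \<noteq> 4 * b + 3"
  "4 * a + 2 \<noteq> Suc (Suc (Suc (4 * b)))"
  "4 * a + 2 \<noteq> 4 * b + 3"
  "Suc (Suc (Suc (4 * a))) \<noteq> 4 * b"
  "4 * a + 3 \<noteq> 4 * b"
  "Suc (Suc (Suc (4 * a))) \<noteq> Suc (4 * b)"
  "Suc (Suc (Suc (4 * a))) \<noteq> 4 * b + 1"
  "4 * a + 3 \<noteq> Suc (4 * b)"
  "4 * a + 3 \<noteq> 4 * b + 1"
  "Suc (Suc (Suc (4 * a))) \<noteq> Suc (Suc (4 * b))"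
  "Suc (Suc (Suc (4 * a))) \<noteq> 4 * b + 2"
  "4 * a + 3 \<noteq> Suc (Suc (4 * b))"
  "4 * a + 3 \<noteq> 4 * b + 2"
  by presburger+

lemma enc_inj: "inj enc"
proof (rule injI)
  fix a b assume "enc a = enc b" then show "a = b"
    by (cases a; cases b; auto split: if_splits; presburger)
qed

lemma enc_eq_iff[simp]: "enc a = enc b \<longleftrightarrow> a = b"
  using enc_inj by (auto dest: injD)

locale thm6 =
  fixes P0 R0 :: npos and m i :: nat
  assumes posP: "is_poset P0" and posR: "is_poset R0" and niso: "\<not> pos_iso P0 R0"
    and szP: "psize P0 = m" and szR: "psize R0 = m" and im: "i > m"
begin

definition Z :: "bool \<Rightarrow> npos" where "Z s = (if s then R0 else P0)"
definition PR :: npos where "PR = disj_union (above_chain P0 i) (above_chain R0 i)"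

lemma Z_poset: "is_poset (Z s)" using posP posR by (simp add: Z_def)

fun inE :: "elt \<Rightarrow> bool" where
  "inE (C s j) = (j < i)"
| "inE (E s p) = (p \<in> fst (Z s))"

fun leE :: "elt \<Rightarrow> elt \<Rightarrow> bool" where
  "leE (C s j) (C t k) = (s = t \<and> j \<le> k \<and> k < i)"
| "leE (C s j) (E t p) = (s = t \<and> j < i \<and> p \<in> fst (Z s))"
| "leE (E s p) (E t q) = (s = t \<and> (p, q) \<in> snd (Z s))"
| "leE (E s p) (C t k) = False"

lemma PR_fst_eq: "fst PR = (\<lambda>j. 4*j) ` {..<i} \<union> (\<lambda>p. 4*p+2) ` fst P0 \<union>
   (\<lambda>j. 4*j+1) ` {..<i} \<union> (\<lambda>p. 4*p+3) ` fst R0"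
  unfolding PR_def disj_union_def above_chain_def map_pos_def chain_def Let_def
  by (simp add: image_Un image_image atLeast0LessThan ac_simps numeral_3_eq_3)

lemma PR_snd: "(x, y) \<in> snd PR \<longleftrightarrow>
   (\<exists>j k. j \<le> k \<and> k < i \<and> x = 4*j \<and> y = 4*k) \<or>
   (\<exists>p q. (p,q) \<in> snd P0 \<and> x = 4*p+2 \<and> y = 4*q+2) \<or>
   (\<exists>j p. j < i \<and> p \<in> fst P0 \<and> x = 4*j \<and> y = 4*p+2) \<or>
   (\<exists>j k. j \<le> k \<and> k < i \<and> x = 4*j+1 \<and> y = 4*k+1) \<or>
   (\<exists>p q. (p,q) \<in> snd R0 \<and> x = 4*p+3 \<and> y = 4*q+3) \<or>
   (\<exists>j p. j < i \<and> p \<in> fst R0 \<and> x = 4*j+1 \<and> y = 4*p+3)"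
  unfolding PR_def disj_union_def above_chain_def map_pos_def chain_def Let_def
  apply (simp add: image_Un image_image atLeast0LessThan ac_simps numeral_3_eq_3 image_iff split_beta)
  apply (rule iffI; elim disjE; fastforce)
  done

lemma ZF[simp]: "Z False = P0" and ZT[simp]: "Z True = R0" by (simp_all add: Z_def)

lemma PR_fst: "fst PR = enc ` {a. inE a}"
proof -
  have "enc ` {a. inE a} = (\<lambda>j. 4*j) ` {..<i} \<union> (\<lambda>p. 4*p+2) ` fst P0 \<union>
   (\<lambda>j. 4*j+1) ` {..<i} \<union> (\<lambda>p. 4*p+3) ` fst R0"
  proof (intro equalityI subsetI)
    fix x assume "x \<in> enc ` {a. inE a}"
    then obtain a where "inE a" "x = enc a" by auto
    then show "x \<in> (\<lambda>j. 4*j) ` {..<i} \<union> (\<lambda>p. 4*p+2) ` fst P0 \<union>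
     (\<lambda>j. 4*j+1) ` {..<i} \<union> (\<lambda>p. 4*p+3) ` fst R0"
      by (cases a; auto simp: Z_def split: if_splits)
  next
    fix x assume "x \<in> (\<lambda>j. 4*j) ` {..<i} \<union> (\<lambda>p. 4*p+2) ` fst P0 \<union>
     (\<lambda>j. 4*j+1) ` {..<i} \<union> (\<lambda>p. 4*p+3) ` fst R0"
    then show "x \<in> enc ` {a. inE a}"
    proof (elim UnE imageE)
      fix j assume "x = 4*j" "j \<in> {..<i}" then show ?thesis
        by (intro image_eqI[of _ _ "C False j"]) auto
    next
      fix j assume "x = 4*j+1" "j \<in> {..<i}" then show ?thesis
        by (intro image_eqI[of _ _ "C True j"]) auto
    next
      fix j assume "x = 4*j+2" "j \<in> fst P0" then show ?thesis
        by (intro image_eqI[of _ _ "E False j"]) auto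
    next
      fix j assume "x = 4*j+3" "j \<in> fst R0" then show ?thesis
        by (intro image_eqI[of _ _ "E True j"]) auto
    qed
  qed
  then show ?thesis using PR_fst_eq by simp
qed

lemma leE_inE: "leE a b \<Longrightarrow> inE a \<and> inE b"
  using Z_poset[unfolded is_poset_def]
  by (cases a; cases b; auto)

lemma PR_snd_CC: "(enc (C s j), enc (C t k)) \<in> snd PR \<longleftrightarrow> leE (C s j) (C t k)"
  by (cases s; cases t; simp add: PR_snd)

lemma PR_snd_CE: "(enc (C s j), enc (E t k)) \<in> snd PR \<longleftrightarrow> leE (C s j) (E t k)"
  by (cases s; cases t; simp add: PR_snd)

lemma PR_snd_EE: "(enc (E s j), enc (E t k)) \<in> snd PR \<longleftrightarrow> leE (E s j) (E t k)"
  by (cases s; cases t; simp add: PR_snd)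

lemma PR_snd_EC: "(enc (E s j), enc (C t k)) \<in> snd PR \<longleftrightarrow> leE (E s j) (C t k)"
  by (cases s; cases t; simp add: PR_snd)

lemma PR_snd': "(enc a, enc b) \<in> snd PR \<longleftrightarrow> leE a b"
  using PR_snd_CC PR_snd_CE PR_snd_EE PR_snd_EC by (cases a; cases b) blast+


lemma enc_forms: "4*j = enc (C False j)" "4*j+1 = enc (C True j)"
  "4*j+2 = enc (E False j)" "4*j+3 = enc (E True j)" by simp_all

lemma PR_snd_elt: "(x, y) \<in> snd PR \<longleftrightarrow> (\<exists>a b. x = enc a \<and> y = enc b \<and> leE a b)"
proof
  assume h: "(x, y) \<in> snd PR"
  have "\<exists>a b. x = enc a \<and> y = enc b" using h unfolding PR_snd
    using enc_forms by (elim disjE exE conjE; blast)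
  then show "\<exists>a b. x = enc a \<and> y = enc b \<and> leE a b" using h PR_snd' by blast
qed (use PR_snd' in blast)

lemma inE_set: "{a. inE a} = C False ` {..<i} \<union> C True ` {..<i} \<union> E False ` fst P0 \<union> E True ` fst R0"
proof (intro equalityI subsetI)
  fix a assume "a \<in> {a. inE a}" then show "a \<in> C False ` {..<i} \<union> C True ` {..<i} \<union> E False ` fst P0 \<union> E True ` fst R0"
    by (cases a; rename_tac s j; case_tac s; auto simp: Z_def)
qed (auto simp: Z_def)

lemma finite_inE: "finite {a. inE a}"
  unfolding inE_set using posP posR by (auto simp: is_poset_def)

lemma Z_sub: "(p, q) \<in> snd (Z s) \<Longrightarrow> p \<in> fst (Z s) \<and> q \<in> fst (Z s)"
  using Z_poset[unfolded is_poset_def] by blast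

lemma leE_refl: "inE a \<Longrightarrow> leE a a"
  using Z_poset[unfolded is_poset_def refl_on_def] by (cases a) auto

lemma leE_antisym: "leE a b \<Longrightarrow> leE b a \<Longrightarrow> a = b"
  using Z_poset[unfolded is_poset_def antisym_def] by (cases a; cases b) auto

lemma leE_trans: "leE a b \<Longrightarrow> leE b c \<Longrightarrow> leE a c"
  using Z_poset[unfolded is_poset_def trans_def] Z_sub
  by (cases a; cases b; cases c) auto

lemma PR_poset: "is_poset PR"
  unfolding is_poset_def
proof (intro conjI)
  show "finite (fst PR)" unfolding PR_fst using finite_inE by simp
  show "snd PR \<subseteq> fst PR \<times> fst PR" unfolding PR_fst
    using PR_snd_elt leE_inE by fastforce
  show "refl_on (fst PR) (snd PR)" unfolding refl_on_def PR_fst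
    using PR_snd_elt leE_inE leE_refl by fastforce
  show "antisym (snd PR)" unfolding antisym_def
    using PR_snd_elt leE_antisym by fastforce
  show "trans (snd PR)" unfolding trans_def
    using PR_snd_elt leE_trans enc_eq_iff by metis
qed

lemma card_inE: "card {a. inE a} = 2 * m + 2 * i"
proof -
  have fP: "finite (fst P0)" "finite (fst R0)" using posP posR by (auto simp: is_poset_def)
  have "card {a. inE a} = card (C False ` {..<i}) + card (C True ` {..<i}) + card (E False ` fst P0) + card (E True ` fst R0)"
    unfolding inE_set using fP
    by (subst card_Un_disjoint, auto)+
  also have "\<dots> = i + i + m + m" using szP szR unfolding psize_def
    by (simp add: card_image inj_on_def)
  finally show ?thesis by simp
qed

lemma psize_PR: "psize PR = 2 * m + 2 * i"
  unfolding psize_def PR_fst using card_inE by (subst card_image) (auto intro: inj_on_subset[OF enc_inj])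

declare enc.simps[simp del]

end


lemma nat_downclosed:
  fixes A :: "nat set"
  assumes "A \<subseteq> {..<i}" "\<And>j j'. j \<in> A \<Longrightarrow> j' \<le> j \<Longrightarrow> j' \<in> A"
  shows "A = {..<card A}"
proof (cases "A = {}")
  case False
  have fin: "finite A" using assms(1) finite_subset by blast
  let ?k = "Max A"
  have "A = {..?k}"
  proof
    show "A \<subseteq> {..?k}" using fin by auto
    show "{..?k} \<subseteq> A" using assms(2) Max_in[OF fin False] by auto
  qed
  then have "A = {..<Suc ?k}" by (simp add: lessThan_Suc_atMost)
  then show ?thesis by (metis card_lessThan)
qed simp

context thm6 begin

definition downE :: "elt set \<Rightarrow> bool" where
  "downE T \<longleftrightarrow> T \<subseteq> {a. inE a} \<and> (\<forall>b\<in>T. \<forall>a. leE a b \<longrightarrow> a \<in> T)"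

definition CC :: "nat \<Rightarrow> nat \<Rightarrow> elt set" where
  "CC a b = C False ` {..<a} \<union> C True ` {..<b}"

definition SP :: "bool \<Rightarrow> nat set \<Rightarrow> elt set" where
  "SP s D = C s ` {..<i} \<union> E s ` D \<union> C (\<not> s) ` {..<m + 1 - card D}"

lemma downset_PR_iff: "is_downset PR S \<longleftrightarrow> S = enc ` (enc -` S) \<and> downE (enc -` S)"
  unfolding is_downset_def downE_def PR_fst PR_snd_elt
  by (auto 4 4 dest: leE_inE)

lemma downset_PR_enc: "downE T \<Longrightarrow> is_downset PR (enc ` T)"
  unfolding downset_PR_iff by (simp add: inj_vimage_image_eq[OF enc_inj])

lemma card_enc: "card (enc ` T) = card T"
  by (simp add: card_image inj_on_subset[OF enc_inj])

lemma fin_Z: "finite (fst (Z s))" using Z_poset by (simp add: is_poset_def)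

lemma card_Z: "card (fst (Z s)) = m" using szP szR by (simp add: Z_def psize_def)

lemma down_enum:
  assumes T: "downE T" and cT: "card T = m + i + 1"
  shows "(\<exists>a. m + 1 \<le> a \<and> a \<le> i \<and> T = CC a (m + i + 1 - a)) \<or>
         (\<exists>s D. is_downset (Z s) D \<and> D \<noteq> {} \<and> T = SP s D)"
proof -
  define A where "A s = {j. C s j \<in> T}" for s
  define Dd where "Dd s = {p. E s p \<in> T}" for s
  have Tdec: "T = C s ` A s \<union> C (\<not> s) ` A (\<not> s) \<union> E s ` Dd s \<union> E (\<not> s) ` Dd (\<not> s)" for s
  proof (intro equalityI subsetI)
    fix x assume "x \<in> T" then show "x \<in> C s ` A s \<union> C (\<not> s) ` A (\<not> s) \<union> E s ` Dd s \<union> E (\<not> s) ` Dd (\<not> s)"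
      unfolding A_def Dd_def by (cases x; rename_tac t j; case_tac "t = s"; auto)
  qed (auto simp: A_def Dd_def)
  have Asub: "A s \<subseteq> {..<i}" for s using T unfolding downE_def A_def by auto
  have Aclosed: "j' \<in> A s" if "j \<in> A s" "j' \<le> j" for s j j'
  proof -
    have "j < i" using Asub that by auto
    then have "leE (C s j') (C s j)" using that by simp
    then show ?thesis using T that unfolding downE_def A_def by blast
  qed
  have Aeq: "A s = {..<card (A s)}" for s
    using Asub[of s] Aclosed[of _ s] by (intro nat_downclosed) auto
  have cA: "card (A s) \<le> i" for s using Asub by (metis card_lessThan card_mono finite_lessThan)
  have Dsub: "Dd s \<subseteq> fst (Z s)" for s using T unfolding downE_def Dd_def by auto
  have Ddown: "is_downset (Z s) (Dd s)" for s
    unfolding is_downset_def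
  proof (intro conjI ballI impI)
    fix x y assume "x \<in> Dd s" "y \<in> fst (Z s)" "(y, x) \<in> snd (Z s)"
    then have "leE (E s y) (E s x)" by simp
    then show "y \<in> Dd s" using T \<open>x \<in> Dd s\<close> unfolding downE_def Dd_def by blast
  qed (rule Dsub)
  have cD: "card (Dd s) \<le> m" for s using Dsub card_Z fin_Z by (metis card_mono)
  have Dfull: "A s = {..<i}" if ne: "Dd s \<noteq> {}" for s
  proof -
    obtain p where p: "p \<in> Dd s" using ne by blast
    have "j \<in> A s" if "j < i" for j
    proof -
      have "leE (C s j) (E s p)" using that p Dsub by auto
      then show ?thesis using T p unfolding downE_def A_def Dd_def by blast
    qed
    then show ?thesis using Asub by auto
  qed
  have finA: "finite (A s)" for s using Asub finite_subset by blast
  have finD: "finite (Dd s)" for s using Dsub fin_Z finite_subset by blast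
  have cTs: "card T = card (A s) + card (A (\<not> s)) + card (Dd s) + card (Dd (\<not> s))" for s
    apply (subst Tdec[of s])
    using finA finD
    apply (subst card_Un_disjoint, auto)+
    apply (simp add: card_image inj_on_def)
    done
  show ?thesis
  proof (cases "Dd False = {} \<and> Dd True = {}")
    case True
    then have "T = CC (card (A False)) (card (A True))"
      using Tdec[of False] Aeq unfolding CC_def by auto
    moreover have "card (A False) + card (A True) = m + i + 1" using cTs[of False] True cT by simp
    moreover have "card (A True) = m + i + 1 - card (A False)" using calculation by simp
    ultimately have "m + 1 \<le> card (A False) \<and> card (A False) \<le> i \<and> T = CC (card (A False)) (m + i + 1 - card (A False))"
      using cA[of False] cA[of True] by auto
    then show ?thesis by blast
  next
    case False
    then obtain s where s: "Dd s \<noteq> {}" by blast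
    show ?thesis
    proof (cases "Dd (\<not> s) = {}")
      case True
      have "card (A (\<not> s)) = m + 1 - card (Dd s)"
        using cTs[of s] Dfull[OF s] True cT cD[of s] by simp
      then have "T = SP s (Dd s)" unfolding SP_def using Tdec[of s] Dfull[OF s] True Aeq[of "\<not> s"]
        by (simp add: Un_ac)
      then show ?thesis using Ddown s by blast
    next
      case False
      have "card (Dd s) \<ge> 1" "card (Dd (\<not> s)) \<ge> 1" using s False finD
        by (simp_all add: Suc_le_eq card_gt_0_iff)
      then have "card T \<ge> 2 * i + 2" using cTs[of s] Dfull[OF s] Dfull[OF False] by simp
      then show ?thesis using cT im by simp
    qed
  qed
qed

end


definition npred :: "npos \<Rightarrow> nat \<Rightarrow> nat" where
  "npred Q x = card {y \<in> fst Q. (y, x) \<in> snd Q \<and> y \<noteq> x}"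

definition hasH :: "nat \<Rightarrow> npos \<Rightarrow> bool" where
  "hasH t Q \<longleftrightarrow> (\<exists>x\<in>fst Q. t \<le> npred Q x)"

definition hasLeast :: "npos \<Rightarrow> bool" where
  "hasLeast Q \<longleftrightarrow> (\<exists>l\<in>fst Q. \<forall>x\<in>fst Q. (l, x) \<in> snd Q)"

definition core :: "nat \<Rightarrow> npos \<Rightarrow> npos" where
  "core t Q = induced Q {x \<in> fst Q. t \<le> npred Q x}"

lemma npred_iso:
  assumes f: "bij_betw f (fst Q) (fst Q')"
    "\<forall>x\<in>fst Q. \<forall>y\<in>fst Q. (x, y) \<in> snd Q \<longleftrightarrow> (f x, f y) \<in> snd Q'"
    and x: "x \<in> fst Q"
  shows "npred Q' (f x) = npred Q x"
proof -
  have "{y \<in> fst Q'. (y, f x) \<in> snd Q' \<and> y \<noteq> f x} = f ` {y \<in> fst Q. (y, x) \<in> snd Q \<and> y \<noteq> x}"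
  proof (intro equalityI subsetI)
    fix y assume y: "y \<in> {y \<in> fst Q'. (y, f x) \<in> snd Q' \<and> y \<noteq> f x}"
    then obtain z where z: "z \<in> fst Q" "y = f z" using f(1) by (auto simp: bij_betw_def)
    then show "y \<in> f ` {y \<in> fst Q. (y, x) \<in> snd Q \<and> y \<noteq> x}" using y f(2) x by auto
  next
    fix y assume "y \<in> f ` {y \<in> fst Q. (y, x) \<in> snd Q \<and> y \<noteq> x}"
    then obtain z where z: "z \<in> fst Q" "(z, x) \<in> snd Q" "z \<noteq> x" "y = f z" by auto
    have "f z \<noteq> f x" using z x f(1) by (metis bij_betw_def inj_onD)
    then show "y \<in> {y \<in> fst Q'. (y, f x) \<in> snd Q' \<and> y \<noteq> f x}"
      using z f x by (auto simp: bij_betw_def)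
  qed
  moreover have "inj_on f {y \<in> fst Q. (y, x) \<in> snd Q \<and> y \<noteq> x}"
    using f(1) by (auto simp: bij_betw_def intro: inj_on_subset)
  ultimately show ?thesis unfolding npred_def by (simp add: card_image)
qed

lemma hasH_iso1: assumes "pos_iso Q Q'" "hasH t Q" shows "hasH t Q'"
proof -
  obtain f where f: "bij_betw f (fst Q) (fst Q')"
    "\<forall>x\<in>fst Q. \<forall>y\<in>fst Q. (x, y) \<in> snd Q \<longleftrightarrow> (f x, f y) \<in> snd Q'"
    using assms unfolding pos_iso_def by blast
  obtain x where "x \<in> fst Q" "t \<le> npred Q x" using assms unfolding hasH_def by blast
  then show ?thesis unfolding hasH_def using npred_iso[OF f] f(1)
    by (metis bij_betwE)
qed

lemma hasH_iso: "pos_iso Q Q' \<Longrightarrow> hasH t Q = hasH t Q'"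
  using hasH_iso1 pos_iso_sym by blast

lemma hasLeast_iso1: assumes "pos_iso Q Q'" "hasLeast Q" shows "hasLeast Q'"
proof -
  obtain f where f: "bij_betw f (fst Q) (fst Q')"
    "\<forall>x\<in>fst Q. \<forall>y\<in>fst Q. (x, y) \<in> snd Q \<longleftrightarrow> (f x, f y) \<in> snd Q'"
    using assms unfolding pos_iso_def by blast
  obtain l where l: "l \<in> fst Q" "\<forall>x\<in>fst Q. (l, x) \<in> snd Q" using assms unfolding hasLeast_def by blast
  have "\<forall>y\<in>fst Q'. (f l, y) \<in> snd Q'"
  proof
    fix y assume "y \<in> fst Q'"
    then obtain x where "x \<in> fst Q" "y = f x" using f(1) by (auto simp: bij_betw_def)
    then show "(f l, y) \<in> snd Q'" using l f(2) by blast
  qed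
  then show ?thesis unfolding hasLeast_def using l f(1) by (metis bij_betwE)
qed

lemma hasLeast_iso: "pos_iso Q Q' \<Longrightarrow> hasLeast Q = hasLeast Q'"
  using hasLeast_iso1 pos_iso_sym by blast

lemma core_iso: assumes "pos_iso Q Q'" shows "pos_iso (core t Q) (core t Q')"
proof -
  obtain f where f: "bij_betw f (fst Q) (fst Q')"
    "\<forall>x\<in>fst Q. \<forall>y\<in>fst Q. (x, y) \<in> snd Q \<longleftrightarrow> (f x, f y) \<in> snd Q'"
    using assms unfolding pos_iso_def by blast
  let ?K = "{x \<in> fst Q. t \<le> npred Q x}" and ?K' = "{x \<in> fst Q'. t \<le> npred Q' x}"
  have "f ` ?K = ?K'"
  proof (intro equalityI subsetI)
    fix y assume "y \<in> f ` ?K" then show "y \<in> ?K'" using npred_iso[OF f] f(1) by (auto dest: bij_betwE)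
  next
    fix y assume y: "y \<in> ?K'"
    then obtain x where "x \<in> fst Q" "y = f x" using f(1) by (auto simp: bij_betw_def)
    then show "y \<in> f ` ?K" using y npred_iso[OF f] by auto
  qed
  then have "bij_betw f ?K ?K'" using f(1) by (auto simp: bij_betw_def intro: inj_on_subset)
  moreover have "\<forall>x\<in>?K. \<forall>y\<in>?K. (x, y) \<in> snd Q \<inter> ?K \<times> ?K \<longleftrightarrow> (f x, f y) \<in> snd Q' \<inter> ?K' \<times> ?K'"
    using f(2) \<open>f ` ?K = ?K'\<close> by auto
  ultimately show ?thesis unfolding core_def induced_def pos_iso_def by auto
qed

context thm6 begin

abbreviation IPR :: "elt set \<Rightarrow> npos" where "IPR T \<equiv> induced PR (enc ` T)"

lemma iso_elt:
  assumes h: "bij_betw h T T'" and o: "\<forall>a\<in>T. \<forall>b\<in>T. leE a b \<longleftrightarrow> leE (h a) (h b)"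
  shows "pos_iso (IPR T) (IPR T')"
proof -
  let ?g = "inv enc"
  have g: "?g (enc a) = a" for a by (simp add: enc_inj)
  let ?f = "enc \<circ> h \<circ> ?g"
  have "bij_betw ?f (enc ` T) (enc ` T')"
  proof -
    have "bij_betw ?g (enc ` T) T"
      by (rule bij_betw_byWitness[where f'=enc]) (auto simp: g)
    moreover have "bij_betw enc T' (enc ` T')" by (simp add: bij_betw_imageI inj_on_subset[OF enc_inj])
    ultimately show ?thesis using h by (metis bij_betw_trans)
  qed
  moreover have "\<forall>x\<in>enc ` T. \<forall>y\<in>enc ` T. (x, y) \<in> snd PR \<inter> enc ` T \<times> enc ` T \<longleftrightarrow>
      (?f x, ?f y) \<in> snd PR \<inter> enc ` T' \<times> enc ` T'"
    using o h by (auto simp: g PR_snd' bij_betw_def)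
  ultimately show ?thesis unfolding pos_iso_def induced_def by auto
qed

lemma npred_IPR: "a \<in> T \<Longrightarrow> npred (IPR T) (enc a) = card {b \<in> T. leE b a \<and> b \<noteq> a}"
proof -
  assume a: "a \<in> T"
  have "{y \<in> fst (IPR T). (y, enc a) \<in> snd (IPR T) \<and> y \<noteq> enc a} = enc ` {b \<in> T. leE b a \<and> b \<noteq> a}"
    using a by (auto simp: induced_def PR_snd')
  then show ?thesis unfolding npred_def by (simp add: card_enc)
qed

lemma IPR_poset: "downE T \<Longrightarrow> is_poset (IPR T)"
  using PR_poset downset_PR_enc by (intro induced_poset) (auto simp: is_downset_def)

end


fun swp :: "elt \<Rightarrow> elt" where
  "swp (C s j) = C (\<not> s) j"
| "swp (E s p) = E s p"

fun relab :: "bool \<Rightarrow> bool \<Rightarrow> (nat \<Rightarrow> nat) \<Rightarrow> elt \<Rightarrow> elt" where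
  "relab s t g (C b j) = C (if b = s then t else \<not> t) j"
| "relab s t g (E b p) = E t (g p)"

context thm6 begin

lemma CC_downE: "a \<le> i \<Longrightarrow> b \<le> i \<Longrightarrow> downE (CC a b)"
  unfolding downE_def CC_def
  apply (intro conjI)
   apply auto[1]
  apply (intro ballI allI impI)
  subgoal for y x by (cases x; cases y; auto)
  done

lemma card_CC: "card (CC a b) = a + b"
  unfolding CC_def by (subst card_Un_disjoint) (auto simp: card_image inj_on_def)

lemma fin_down: "is_downset (Z s) D \<Longrightarrow> finite D"
  using fin_Z finite_subset by (auto simp: is_downset_def)

lemma card_down: "is_downset (Z s) D \<Longrightarrow> card D \<le> m"
  using fin_Z card_Z card_mono by (metis is_downset_def)

lemma SP_downE: "is_downset (Z s) D \<Longrightarrow> downE (SP s D)"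
  unfolding downE_def SP_def
  apply (intro conjI)
  using im card_down[of s D] apply (auto simp: is_downset_def)[1]
  apply (intro ballI allI impI)
  subgoal for y x using Z_sub[of _ _ s] by (cases x; cases y; auto simp: is_downset_def)
  done

lemma card_SP: assumes "is_downset (Z s) D" shows "card (SP s D) = m + i + 1"
proof -
  have "card (SP s D) = i + card D + (m + 1 - card D)"
    unfolding SP_def using fin_down[OF assms]
    by (subst card_Un_disjoint, auto simp: card_image inj_on_def)+
  then show ?thesis using card_down[OF assms] by simp
qed

lemma preds_C: assumes "downE T" "C s j \<in> T"
  shows "{b \<in> T. leE b (C s j) \<and> b \<noteq> C s j} = C s ` {..<j}"
proof (intro equalityI subsetI)
  fix x assume "x \<in> {b \<in> T. leE b (C s j) \<and> b \<noteq> C s j}" then show "x \<in> C s ` {..<j}"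
    by (cases x) auto
next
  have ji: "j < i" using assms unfolding downE_def by auto
  fix x assume "x \<in> C s ` {..<j}"
  then obtain j' where "j' < j" "x = C s j'" by auto
  then show "x \<in> {b \<in> T. leE b (C s j) \<and> b \<noteq> C s j}" using assms ji unfolding downE_def by auto
qed

lemma npred_C: assumes "downE T" "C s j \<in> T" shows "npred (IPR T) (enc (C s j)) = j"
  using npred_IPR[OF assms(2)] preds_C[OF assms] by (simp add: card_image inj_on_def)

lemma hasH_CC: assumes "a \<le> i" "b \<le> i"
  shows "hasH t (IPR (CC a b)) \<longleftrightarrow> t < a \<or> t < b"
proof -
  have d: "downE (CC a b)" using CC_downE assms .
  show ?thesis unfolding hasH_def
  proof
    assume "\<exists>x\<in>fst (IPR (CC a b)). t \<le> npred (IPR (CC a b)) x"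
    then obtain x where "x \<in> CC a b" "t \<le> npred (IPR (CC a b)) (enc x)" by (auto simp: induced_def)
    then show "t < a \<or> t < b" using npred_C[OF d] unfolding CC_def by auto
  next
    assume "t < a \<or> t < b"
    then show "\<exists>x\<in>fst (IPR (CC a b)). t \<le> npred (IPR (CC a b)) x"
    proof
      assume "t < a" then have "C False t \<in> CC a b" unfolding CC_def by auto
      then show ?thesis using npred_C[OF d] by (intro bexI[of _ "enc (C False t)"]) (auto simp: induced_def)
    next
      assume "t < b" then have "C True t \<in> CC a b" unfolding CC_def by auto
      then show ?thesis using npred_C[OF d] by (intro bexI[of _ "enc (C True t)"]) (auto simp: induced_def)
    qed
  qed
qed

lemma npred_E_SP: assumes "is_downset (Z s) D" "p \<in> D"
  shows "i \<le> npred (IPR (SP s D)) (enc (E s p))"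
proof -
  have "E s p \<in> SP s D" using assms unfolding SP_def by auto
  moreover have "C s ` {..<i} \<subseteq> {b \<in> SP s D. leE b (E s p) \<and> b \<noteq> E s p}"
    using assms unfolding SP_def is_downset_def by auto
  moreover have "finite (SP s D)" using fin_down[OF assms(1)] unfolding SP_def by auto
  ultimately have "card (C s ` {..<i}) \<le> card {b \<in> SP s D. leE b (E s p) \<and> b \<noteq> E s p}"
    by (intro card_mono) auto
  moreover have "card (C s ` {..<i}) = i" by (simp add: card_image inj_on_def)
  ultimately show ?thesis using npred_IPR[OF \<open>E s p \<in> SP s D\<close>] by simp
qed

lemma core_SP: assumes "is_downset (Z s) D"
  shows "core i (IPR (SP s D)) = IPR (E s ` D)"
proof -
  have d: "downE (SP s D)" using SP_downE[OF assms] .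
  have "{x \<in> fst (IPR (SP s D)). i \<le> npred (IPR (SP s D)) x} = enc ` E s ` D"
  proof (intro equalityI subsetI)
    fix x assume x: "x \<in> {x \<in> fst (IPR (SP s D)). i \<le> npred (IPR (SP s D)) x}"
    then obtain a where a: "a \<in> SP s D" "x = enc a" by (auto simp: induced_def)
    have "m + 1 - card D \<le> i" using im by simp
    then show "x \<in> enc ` E s ` D" using a x npred_C[OF d] unfolding SP_def by auto
  next
    fix x assume "x \<in> enc ` E s ` D"
    then show "x \<in> {x \<in> fst (IPR (SP s D)). i \<le> npred (IPR (SP s D)) x}"
      using npred_E_SP[OF assms] unfolding SP_def by (auto simp: induced_def)
  qed
  moreover have "enc ` E s ` D \<subseteq> enc ` SP s D" unfolding SP_def by auto
  ultimately show ?thesis unfolding core_def induced_def by auto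
qed

lemma hasH_SP: assumes "is_downset (Z s) D" "D \<noteq> {}" shows "hasH i (IPR (SP s D))"
proof -
  obtain p where "p \<in> D" using assms by blast
  then show ?thesis unfolding hasH_def using npred_E_SP[OF assms(1)]
    by (intro bexI[of _ "enc (E s p)"]) (auto simp: induced_def SP_def)
qed

lemma iso_E: assumes "D \<subseteq> fst (Z s)" shows "pos_iso (induced (Z s) D) (IPR (E s ` D))"
proof -
  have "bij_betw (\<lambda>p. enc (E s p)) D (enc ` E s ` D)"
    by (auto simp: bij_betw_def inj_on_def)
  moreover have "\<forall>x\<in>D. \<forall>y\<in>D. (x, y) \<in> snd (Z s) \<inter> D \<times> D \<longleftrightarrow>
      (enc (E s x), enc (E s y)) \<in> snd PR \<inter> enc ` E s ` D \<times> enc ` E s ` D"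
    by (auto simp: PR_snd')
  ultimately show ?thesis unfolding pos_iso_def induced_def by auto
qed

lemma swp_CC: "x \<in> CC a b \<Longrightarrow> swp x \<in> CC b a"
  unfolding CC_def by (elim UnE imageE) auto

lemma swp_swp: "swp (swp x) = x" by (cases x) auto

lemma swap_CC: "pos_iso (IPR (CC a b)) (IPR (CC b a))"
proof (rule iso_elt)
  show "bij_betw swp (CC a b) (CC b a)"
    by (rule bij_betw_byWitness[where f'=swp]) (auto simp: swp_swp swp_CC)
  show "\<forall>x\<in>CC a b. \<forall>y\<in>CC a b. leE x y \<longleftrightarrow> leE (swp x) (swp y)"
    unfolding CC_def by auto
qed

lemma respect_SP:
  assumes D: "is_downset (Z s) D" and D': "is_downset (Z t) D'"
    and iso: "pos_iso (induced (Z s) D) (induced (Z t) D')"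
  shows "pos_iso (IPR (SP s D)) (IPR (SP t D'))"
proof -
  obtain g where g1: "bij_betw g D D'"
    and g0: "\<forall>x\<in>D. \<forall>y\<in>D. (x, y) \<in> snd (Z s) \<inter> D \<times> D \<longleftrightarrow> (g x, g y) \<in> snd (Z t) \<inter> D' \<times> D'"
    using iso unfolding pos_iso_def induced_def by auto
  have gD: "g ` D = D'" using g1 by (simp add: bij_betw_def)
  have g2: "\<forall>x\<in>D. \<forall>y\<in>D. (x, y) \<in> snd (Z s) \<longleftrightarrow> (g x, g y) \<in> snd (Z t)"
    using g0 gD by blast
  have cD: "card D' = card D" using g1 by (simp add: bij_betw_same_card)
  let ?h = "relab s t g"
  show ?thesis
  proof (rule iso_elt)
    have "inj_on ?h (SP s D)"
    proof (rule inj_onI)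
      fix x y assume "x \<in> SP s D" "y \<in> SP s D" "?h x = ?h y"
      then show "x = y" unfolding SP_def using g1[unfolded bij_betw_def]
        apply (elim UnE imageE)
        by (simp_all add: inj_on_def split: if_splits)
    qed
    moreover have "?h ` SP s D = SP t D'"
    proof (intro equalityI subsetI)
      fix x assume "x \<in> ?h ` SP s D" then show "x \<in> SP t D'"
        unfolding SP_def using gD cD
        apply (elim UnE imageE)
        apply simp_all
        by blast
    next
      fix x assume x: "x \<in> SP t D'"
      show "x \<in> ?h ` SP s D"
      proof (cases x)
        case (C b j)
        then have "x = ?h (C (if b = t then s else \<not> s) j)" by auto
        moreover have "C (if b = t then s else \<not> s) j \<in> SP s D" using x C cD unfolding SP_def by auto
        ultimately show ?thesis by blast
      next
        case (E b p)
        then obtain q where "q \<in> D" "p = g q" "b = t" using x gD unfolding SP_def by auto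
        then have "x = ?h (E s q)" "E s q \<in> SP s D" using E unfolding SP_def by auto
        then show ?thesis by blast
      qed
    qed
    ultimately show "bij_betw ?h (SP s D) (SP t D')" by (simp add: bij_betw_def)
    show "\<forall>x\<in>SP s D. \<forall>y\<in>SP s D. leE x y \<longleftrightarrow> leE (?h x) (?h y)"
    proof (intro ballI)
      fix x y assume x: "x \<in> SP s D" and y: "y \<in> SP s D"
      have Ds: "D \<subseteq> fst (Z s)" "D' \<subseteq> fst (Z t)" using D D' by (auto simp: is_downset_def)
      have mi: "m + 1 - card D \<le> i" using im by simp
      have gin: "g p \<in> fst (Z t)" if "p \<in> D" for p using that gD Ds by blast
      show "leE x y \<longleftrightarrow> leE (?h x) (?h y)"
        using x y unfolding SP_def
        apply (elim UnE imageE)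
        using g2 gin Ds mi by (simp_all add: subset_iff)
    qed
  qed
qed

end


lemma card_image_corresp:
  assumes "\<forall>x\<in>I. \<forall>y\<in>I. F1 x = F1 y \<longleftrightarrow> F2 x = F2 y"
  shows "card (F1 ` I) = card (F2 ` I)"
proof -
  let ?r = "\<lambda>z. SOME x. x \<in> I \<and> F1 x = z"
  have r: "?r z \<in> I \<and> F1 (?r z) = z" if "z \<in> F1 ` I" for z
    using that by (metis (mono_tags, lifting) imageE someI_ex)
  have "bij_betw (\<lambda>z. F2 (?r z)) (F1 ` I) (F2 ` I)"
    unfolding bij_betw_def
  proof
    show "inj_on (\<lambda>z. F2 (?r z)) (F1 ` I)"
    proof (rule inj_onI)
      fix z w assume z: "z \<in> F1 ` I" and w: "w \<in> F1 ` I" and e: "F2 (?r z) = F2 (?r w)"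
      then have "F1 (?r z) = F1 (?r w)" using assms r[OF z] r[OF w] by blast
      then show "z = w" using r[OF z] r[OF w] by simp
    qed
    show "(\<lambda>z. F2 (?r z)) ` F1 ` I = F2 ` I"
    proof (intro equalityI subsetI)
      fix y assume "y \<in> (\<lambda>z. F2 (?r z)) ` F1 ` I" then show "y \<in> F2 ` I" using r by auto
    next
      fix y assume "y \<in> F2 ` I"
      then obtain x where x: "x \<in> I" "y = F2 x" by auto
      then have "F1 (?r (F1 x)) = F1 x" "?r (F1 x) \<in> I" using r by auto
      then have "F2 (?r (F1 x)) = y" using assms x by blast
      moreover have "F1 x \<in> F1 ` I" using x by blast
      ultimately show "y \<in> (\<lambda>z. F2 (?r z)) ` F1 ` I" by blast
    qed
  qed
  then show ?thesis by (rule bij_betw_same_card)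
qed

context thm6 begin

abbreviation cls :: "elt set \<Rightarrow> npos set" where "cls T \<equiv> iso_class (IPR T)"

definition IS :: "(bool \<times> nat set) set" where
  "IS = {(s, D). is_downset (Z s) D \<and> D \<noteq> {}}"

definition Gcc where "Gcc = (\<lambda>a. cls (CC a (m + i + 1 - a))) ` {m + 1..i}"
definition Gsp where "Gsp = (\<lambda>(s, D). cls (SP s D)) ` IS"

lemma Dn_PR: "Dn (m + i + 1) PR = Gcc \<union> Gsp"
proof (intro equalityI subsetI)
  fix X assume "X \<in> Dn (m + i + 1) PR"
  then obtain S where S: "X = iso_class (induced PR S)" "is_downset PR S" "card S = m + i + 1"
    unfolding Dn_def by blast
  let ?T = "enc -` S"
  have T: "S = enc ` ?T" "downE ?T" using S(2) downset_PR_iff by blast+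
  have cT: "card ?T = m + i + 1" using S(3) T(1) card_enc by metis
  from down_enum[OF T(2) cT] show "X \<in> Gcc \<union> Gsp"
  proof
    assume "\<exists>a. m + 1 \<le> a \<and> a \<le> i \<and> ?T = CC a (m + i + 1 - a)"
    then obtain a where "m + 1 \<le> a" "a \<le> i" "?T = CC a (m + i + 1 - a)" by blast
    then have "X = (\<lambda>a. cls (CC a (m + i + 1 - a))) a" "a \<in> {m + 1..i}" using S(1) T(1) by auto
    then show ?thesis unfolding Gcc_def by blast
  next
    assume "\<exists>s D. is_downset (Z s) D \<and> D \<noteq> {} \<and> ?T = SP s D"
    then obtain s D where "is_downset (Z s) D" "D \<noteq> {}" "?T = SP s D" by blast
    then have "X = (\<lambda>(s, D). cls (SP s D)) (s, D)" "(s, D) \<in> IS"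
      using S(1) T(1) unfolding IS_def by auto
    then show ?thesis unfolding Gsp_def by blast
  qed
next
  fix X assume "X \<in> Gcc \<union> Gsp"
  then obtain T where T: "X = cls T" "downE T" "card T = m + i + 1"
  proof
    assume "X \<in> Gcc"
    then obtain a where "m + 1 \<le> a" "a \<le> i" "X = cls (CC a (m + i + 1 - a))" unfolding Gcc_def by auto
    moreover then have "downE (CC a (m + i + 1 - a))" using im by (intro CC_downE) auto
    moreover have "card (CC a (m + i + 1 - a)) = m + i + 1" using calculation by (simp add: card_CC)
    ultimately show ?thesis using that by blast
  next
    assume "X \<in> Gsp"
    then obtain s D where "is_downset (Z s) D" "X = cls (SP s D)" unfolding Gsp_def IS_def by auto
    then show ?thesis using that SP_downE card_SP by blast
  qed
  have "is_downset PR (enc ` T)" "card (enc ` T) = m + i + 1" "enc ` T \<noteq> {}"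
    using downset_PR_enc[OF T(2)] card_enc[of T] T(3) by auto
  then show "X \<in> Dn (m + i + 1) PR" unfolding Dn_def using T(1) by blast
qed

lemma cls_eq_iso: "downE T' \<Longrightarrow> cls T = cls T' \<Longrightarrow> pos_iso (IPR T) (IPR T')"
  using iso_class_eqD IPR_poset by blast

lemma Gcc_Gsp_disj: "Gcc \<inter> Gsp = {}"
proof -
  have False if a: "m + 1 \<le> a" "a \<le> i" and sD: "(s, D) \<in> IS"
    and e: "cls (CC a (m + i + 1 - a)) = cls (SP s D)" for a s D
  proof -
    have D: "is_downset (Z s) D" "D \<noteq> {}" using sD unfolding IS_def by auto
    have "pos_iso (IPR (CC a (m + i + 1 - a))) (IPR (SP s D))"
      using cls_eq_iso[OF SP_downE[OF D(1)] e] .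
    then have "hasH i (IPR (CC a (m + i + 1 - a)))" using hasH_iso hasH_SP[OF D] by blast
    moreover have "m + i + 1 - a \<le> i" using a by simp
    ultimately show False using hasH_CC[OF a(2), of "m + i + 1 - a" i] a by simp
  qed
  then show ?thesis unfolding Gcc_def Gsp_def by fastforce
qed

lemma card_Gcc: "card Gcc = i + 1 - (m + i + 2) div 2"
proof -
  let ?n = "m + i + 1"
  let ?M = "{(m + i + 2) div 2..i}"
  have "Gcc = (\<lambda>a. cls (CC a (?n - a))) ` ?M"
  proof (intro equalityI subsetI)
    fix X assume "X \<in> Gcc"
    then obtain a where a: "m + 1 \<le> a" "a \<le> i" "X = cls (CC a (?n - a))" unfolding Gcc_def by auto
    show "X \<in> (\<lambda>a. cls (CC a (?n - a))) ` ?M"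
    proof (cases "?n \<le> 2 * a")
      case True
      then have "a \<in> ?M" using a(2) by (simp; presburger)
      then show ?thesis using a(3) by blast
    next
      case False
      have "cls (CC a (?n - a)) = cls (CC (?n - a) a)" using swap_CC iso_class_eq by blast
      moreover have "?n - (?n - a) = a" using a by simp
      moreover have "?n - a \<in> ?M" using False a(1) by (simp; presburger)
      ultimately have "X = (\<lambda>a. cls (CC a (?n - a))) (?n - a)" using a(3) by simp
      then show ?thesis using \<open>?n - a \<in> ?M\<close> by (rule image_eqI)
    qed
  next
    fix X assume "X \<in> (\<lambda>a. cls (CC a (?n - a))) ` ?M"
    then obtain a where a: "a \<in> ?M" "X = cls (CC a (?n - a))" by blast
    have "a \<le> i" using a(1) by simp
    have "m + 1 \<le> a" using a(1) im by (simp; presburger)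
    then show "X \<in> Gcc" unfolding Gcc_def using a(2) \<open>a \<le> i\<close> by auto
  qed
  moreover have "inj_on (\<lambda>a. cls (CC a (?n - a))) ?M"
  proof (rule inj_onI)
    fix a b assume a: "a \<in> ?M" and b: "b \<in> ?M" and e: "cls (CC a (?n - a)) = cls (CC b (?n - b))"
    have b2: "?n - b \<le> b" "b \<le> i" using b by ((simp; presburger), simp)
    have a2: "?n - a \<le> a" "a \<le> i" using a by ((simp; presburger), simp)
    have hb: "hasH t (IPR (CC b (?n - b))) \<longleftrightarrow> t < b" for t
      using hasH_CC[OF b2(2), of "?n - b" t] b2 by auto
    have ha: "hasH t (IPR (CC a (?n - a))) \<longleftrightarrow> t < a" for t
      using hasH_CC[OF a2(2), of "?n - a" t] a2 by auto
    have "downE (CC b (?n - b))" using CC_downE[OF b2(2), of "?n - b"] b2 by simp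
    then have "pos_iso (IPR (CC a (?n - a))) (IPR (CC b (?n - b)))"
      using cls_eq_iso e by blast
    then have "t < a \<longleftrightarrow> t < b" for t using hasH_iso ha hb by blast
    then show "a = b" by (metis less_irrefl nat_neq_iff)
  qed
  ultimately show ?thesis by (simp add: card_image)
qed

lemma Dsets_eq: "Dsets (Z s) = (\<lambda>D. iso_class (induced (Z s) D)) ` {D. is_downset (Z s) D \<and> D \<noteq> {}}"
  unfolding Dsets_def by auto

lemma card_Gsp: "card Gsp = card (Dsets P0 \<union> Dsets R0)"
proof -
  have DD: "Dsets P0 \<union> Dsets R0 = (\<lambda>(s, D). iso_class (induced (Z s) D)) ` IS"
  proof -
    have "Dsets P0 \<union> Dsets R0 = Dsets (Z False) \<union> Dsets (Z True)" by simp
    also have "\<dots> = (\<lambda>(s, D). iso_class (induced (Z s) D)) ` IS"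
      unfolding Dsets_eq IS_def
    proof (intro equalityI subsetI)
      fix X assume "X \<in> (\<lambda>D. iso_class (induced (Z False) D)) ` {D. is_downset (Z False) D \<and> D \<noteq> {}} \<union>
         (\<lambda>D. iso_class (induced (Z True) D)) ` {D. is_downset (Z True) D \<and> D \<noteq> {}}"
      then show "X \<in> (\<lambda>(s, D). iso_class (induced (Z s) D)) ` {(s, D). is_downset (Z s) D \<and> D \<noteq> {}}"
      proof (elim UnE imageE)
        fix D assume "X = iso_class (induced (Z False) D)" "D \<in> {D. is_downset (Z False) D \<and> D \<noteq> {}}"
        then show ?thesis by (intro image_eqI[of _ _ "(False, D)"]) auto
      next
        fix D assume "X = iso_class (induced (Z True) D)" "D \<in> {D. is_downset (Z True) D \<and> D \<noteq> {}}"
        then show ?thesis by (intro image_eqI[of _ _ "(True, D)"]) auto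
      qed
    next
      fix X assume "X \<in> (\<lambda>(s, D). iso_class (induced (Z s) D)) ` {(s, D). is_downset (Z s) D \<and> D \<noteq> {}}"
      then obtain s D where "X = iso_class (induced (Z s) D)" "is_downset (Z s) D" "D \<noteq> {}" by auto
      then show "X \<in> (\<lambda>D. iso_class (induced (Z False) D)) ` {D. is_downset (Z False) D \<and> D \<noteq> {}} \<union>
         (\<lambda>D. iso_class (induced (Z True) D)) ` {D. is_downset (Z True) D \<and> D \<noteq> {}}"
        by (cases s) auto
    qed
    finally show ?thesis .
  qed
  have corr: "cls (SP s D) = cls (SP t D') \<longleftrightarrow>
      iso_class (induced (Z s) D) = iso_class (induced (Z t) D')"
    if "(s, D) \<in> IS" "(t, D') \<in> IS" for s D t D'
  proof -
    have D: "is_downset (Z s) D" and D': "is_downset (Z t) D'" using that unfolding IS_def by auto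
    have Ds: "D \<subseteq> fst (Z s)" "D' \<subseteq> fst (Z t)" using D D' by (auto simp: is_downset_def)
    show ?thesis
    proof
      assume "cls (SP s D) = cls (SP t D')"
      then have "pos_iso (IPR (SP s D)) (IPR (SP t D'))" using cls_eq_iso SP_downE[OF D'] by blast
      then have "pos_iso (IPR (E s ` D)) (IPR (E t ` D'))" using core_iso core_SP[OF D] core_SP[OF D'] by metis
      then have "pos_iso (induced (Z s) D) (induced (Z t) D')"
        using iso_E[OF Ds(1)] iso_E[OF Ds(2)] pos_iso_trans pos_iso_sym by metis
      then show "iso_class (induced (Z s) D) = iso_class (induced (Z t) D')" by (rule iso_class_eq)
    next
      assume "iso_class (induced (Z s) D) = iso_class (induced (Z t) D')"
      then have "pos_iso (induced (Z s) D) (induced (Z t) D')"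
        using iso_class_eqD induced_poset[OF Z_poset Ds(2)] by blast
      then show "cls (SP s D) = cls (SP t D')" using respect_SP[OF D D'] iso_class_eq by blast
    qed
  qed
  have "\<forall>x\<in>IS. \<forall>y\<in>IS. (\<lambda>(s, D). cls (SP s D)) x = (\<lambda>(s, D). cls (SP s D)) y \<longleftrightarrow>
     (\<lambda>(s, D). iso_class (induced (Z s) D)) x = (\<lambda>(s, D). iso_class (induced (Z s) D)) y"
  proof (intro ballI)
    fix x y assume x: "x \<in> IS" and y: "y \<in> IS"
    obtain s D where sD: "x = (s, D)" by force
    obtain t D' where tD: "y = (t, D')" by force
    show "(\<lambda>(s, D). cls (SP s D)) x = (\<lambda>(s, D). cls (SP s D)) y \<longleftrightarrow>
     (\<lambda>(s, D). iso_class (induced (Z s) D)) x = (\<lambda>(s, D). iso_class (induced (Z s) D)) y"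
      using corr[of s D t D'] x y unfolding sD tD by simp
  qed
  then show ?thesis unfolding DD Gsp_def by (rule card_image_corresp)
qed

lemma finite_Dsets: "is_poset P \<Longrightarrow> finite (Dsets P)"
proof -
  assume P: "is_poset P"
  have "Dsets P \<subseteq> (\<lambda>S. iso_class (induced P S)) ` Pow (fst P)"
    unfolding Dsets_def is_downset_def by auto
  moreover have "finite (Pow (fst P))" using P by (simp add: is_poset_def)
  ultimately show ?thesis by (meson finite_imageI finite_subset)
qed

end


definition shp :: "npos \<Rightarrow> nat set \<Rightarrow> nat \<Rightarrow> nat \<Rightarrow> bool" where
  "shp Q A u v \<longleftrightarrow> u \<in> A \<and> v \<in> A \<and> u \<noteq> v \<and>
     (\<forall>z\<in>A. z \<noteq> u \<longrightarrow> (u, z) \<notin> snd Q \<and> (z, u) \<notin> snd Q \<and> (v, z) \<in> snd Q)"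

lemma shp_iso:
  assumes iso: "pos_iso (induced Q' A') (induced Q A)" and s: "shp Q' A' u' v'"
  shows "\<exists>u v. shp Q A u v"
proof -
  obtain f where f: "bij_betw f A' A"
    "\<forall>x\<in>A'. \<forall>y\<in>A'. (x, y) \<in> snd Q' \<inter> A' \<times> A' \<longleftrightarrow> (f x, f y) \<in> snd Q \<inter> A \<times> A"
    using iso unfolding pos_iso_def induced_def by auto
  have fA: "f ` A' = A" "inj_on f A'" using f(1) by (auto simp: bij_betw_def)
  have o: "(x, y) \<in> snd Q' \<longleftrightarrow> (f x, f y) \<in> snd Q" if "x \<in> A'" "y \<in> A'" for x y
    using f(2) that fA by blast
  have "shp Q A (f u') (f v')"
    unfolding shp_def
  proof (intro conjI ballI impI)
    show "f u' \<in> A" "f v' \<in> A" using s fA unfolding shp_def by auto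
    show "f u' \<noteq> f v'" using s fA unfolding shp_def by (metis inj_onD)
  next
    fix z assume z: "z \<in> A" "z \<noteq> f u'"
    then obtain z' where z': "z' \<in> A'" "z = f z'" using fA by auto
    then have "z' \<noteq> u'" using z by auto
    then show "(f u', z) \<notin> snd Q" "(z, f u') \<notin> snd Q" "(f v', z) \<in> snd Q"
      using s z' o unfolding shp_def by auto
  qed
  then show ?thesis by blast
qed

lemma poset_min:
  assumes Q: "is_poset Q" and S: "finite S" "S \<noteq> {}" "S \<subseteq> fst Q"
  shows "\<exists>w\<in>S. \<forall>z\<in>S. (z, w) \<in> snd Q \<longrightarrow> z = w"
  using S
proof (induction S rule: finite_ne_induct)
  case (singleton x) then show ?case by auto
next
  case (insert x S)
  then obtain w where w: "w \<in> S" "\<forall>z\<in>S. (z, w) \<in> snd Q \<longrightarrow> z = w" by auto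
  have tr: "trans (snd Q)" and an: "antisym (snd Q)" using Q by (auto simp: is_poset_def)
  show ?case
  proof (cases "(x, w) \<in> snd Q \<and> x \<noteq> w")
    case True
    have "\<forall>z\<in>insert x S. (z, x) \<in> snd Q \<longrightarrow> z = x"
    proof (intro ballI impI)
      fix z assume "z \<in> insert x S" "(z, x) \<in> snd Q"
      moreover have "z \<in> S \<Longrightarrow> (z, x) \<in> snd Q \<Longrightarrow> False"
      proof -
        assume "z \<in> S" "(z, x) \<in> snd Q"
        then have "(z, w) \<in> snd Q" using True tr by (meson transD)
        then have "z = w" using w \<open>z \<in> S\<close> by blast
        then show False using True \<open>(z, x) \<in> snd Q\<close> an by (metis antisymD)
      qed
      ultimately show "z = x" by blast
    qed
    then show ?thesis by blast
  next
    case False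
    then show ?thesis using w by (intro bexI[of _ w]) auto
  qed
qed

lemma union_bound:
  assumes Q: "is_poset Q"
    and A: "is_downset Q A" "card A = n" and B: "is_downset Q B" "card B = n"
    and sA: "shp Q A uA vA" and sB: "shp Q B uB vB"
    and niso: "\<not> pos_iso (induced Q A) (induced Q B)"
    and noleast: "\<And>T. is_downset Q T \<Longrightarrow> card T = n \<Longrightarrow> \<not> hasLeast (induced Q T)"
  shows "2 * n - 2 \<le> card (A \<union> B)"
proof -
  have fQ: "finite (fst Q)" using Q by (simp add: is_poset_def)
  have AQ: "A \<subseteq> fst Q" and BQ: "B \<subseteq> fst Q" using A B by (auto simp: is_downset_def)
  have fA: "finite A" "finite B" using AQ BQ fQ finite_subset by auto
  have an: "antisym (snd Q)" and rf: "refl_on (fst Q) (snd Q)" using Q by (auto simp: is_poset_def)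
  have sub: "snd Q \<subseteq> fst Q \<times> fst Q" using Q by (auto simp: is_poset_def)
  show ?thesis
  proof (cases "vA = vB")
    case True
    define YA where "YA = A - {uA}"
    define YB where "YB = B - {uB}"
    have A_eq: "A = insert uA YA" "uA \<notin> YA" using sA unfolding YA_def shp_def by auto
    have B_eq: "B = insert uB YB" "uB \<notin> YB" using sB unfolding YB_def shp_def by auto
    have cY: "card YA = n - 1" "card YB = n - 1" using A B sA sB fA unfolding YA_def YB_def shp_def by auto
    have fY: "finite YA" "finite YB" using fA unfolding YA_def YB_def by auto
    show ?thesis
    proof (cases "YA = YB")
      case True
      let ?h = "\<lambda>z. if z = uA then uB else z"
      have "pos_iso (induced Q A) (induced Q B)"
        unfolding pos_iso_def induced_def
      proof (intro exI[of _ ?h] conjI)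
        show "bij_betw ?h (fst (A, snd Q \<inter> A \<times> A)) (fst (B, snd Q \<inter> B \<times> B))"
          using A_eq B_eq True unfolding bij_betw_def inj_on_def by auto
        have uAr: "(uA, uA) \<in> snd Q" "(uB, uB) \<in> snd Q" using rf AQ BQ sA sB unfolding refl_on_def shp_def by auto
        show "\<forall>x\<in>fst (A, snd Q \<inter> A \<times> A). \<forall>y\<in>fst (A, snd Q \<inter> A \<times> A).
            ((x, y) \<in> snd (A, snd Q \<inter> A \<times> A)) = ((?h x, ?h y) \<in> snd (B, snd Q \<inter> B \<times> B))"
          using A_eq B_eq True sA sB uAr unfolding shp_def by auto
      qed
      then show ?thesis using niso by blast
    next
      case False
      have "\<not> YB \<subseteq> YA"
      proof
        assume "YB \<subseteq> YA"
        then have "YB = YA" using card_subset_eq[OF fY(1)] cY by metis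
        then show False using False by simp
      qed
      then have ne: "YB - YA \<noteq> {}" by blast
      obtain w where w: "w \<in> YB - YA" "\<forall>z\<in>YB - YA. (z, w) \<in> snd Q \<longrightarrow> z = w"
        using poset_min[OF Q _ ne] fY BQ unfolding YB_def by blast
      let ?T = "insert w YA"
      have "is_downset Q ?T"
        unfolding is_downset_def
      proof (intro conjI ballI impI)
        show "?T \<subseteq> fst Q" using w AQ BQ unfolding YA_def YB_def by auto
      next
        fix t z assume t: "t \<in> ?T" and z: "z \<in> fst Q" "(z, t) \<in> snd Q"
        show "z \<in> ?T"
        proof (cases "t = w")
          case True
          then have "z \<in> B" using B z w unfolding is_downset_def YB_def by auto
          moreover have "z \<noteq> uB" using sB w z True unfolding shp_def YB_def by auto
          ultimately have "z \<in> YB" unfolding YB_def by auto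
          then show ?thesis using w z True by auto
        next
          case False
          then have tY: "t \<in> YA" using t by auto
          then have "z \<in> A" using A z unfolding is_downset_def YA_def by auto
          moreover have "z \<noteq> uA" using sA tY z unfolding shp_def YA_def by auto
          ultimately show ?thesis unfolding YA_def by auto
        qed
      qed
      moreover have "card ?T = n"
      proof -
        have "n \<ge> 1" using A sA fA unfolding shp_def by (metis card_0_eq empty_iff less_one not_le)
        then show ?thesis using w cY fY by simp
      qed
      moreover have "hasLeast (induced Q ?T)"
        unfolding hasLeast_def induced_def
      proof (intro bexI[of _ vA] ballI)
        show "vA \<in> fst (?T, snd Q \<inter> ?T \<times> ?T)" using sA unfolding shp_def YA_def by auto
        fix x assume "x \<in> fst (?T, snd Q \<inter> ?T \<times> ?T)"
        then have "x = w \<or> x \<in> YA" by auto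
        then have "(vA, x) \<in> snd Q"
          using sA sB w \<open>vA = vB\<close> unfolding shp_def YA_def YB_def by auto
        then show "(vA, x) \<in> snd (?T, snd Q \<inter> ?T \<times> ?T)"
          using \<open>x \<in> fst (?T, snd Q \<inter> ?T \<times> ?T)\<close> sA unfolding shp_def YA_def by auto
      qed
      ultimately show ?thesis using noleast by blast
    qed
  next
    case False
    have "A \<inter> B \<subseteq> {uA, uB}"
    proof
      fix z assume z: "z \<in> A \<inter> B"
      show "z \<in> {uA, uB}"
      proof (rule ccontr)
        assume "z \<notin> {uA, uB}"
        then have zA: "(vA, z) \<in> snd Q" and zB: "(vB, z) \<in> snd Q" "z \<noteq> uA" "z \<noteq> uB"
          using z sA sB unfolding shp_def by auto
        have vBQ: "vB \<in> fst Q" using sB BQ unfolding shp_def by auto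
        have "vB \<in> A" using A vBQ zB z unfolding is_downset_def by auto
        moreover have "vB \<noteq> uA" using sA zB z unfolding shp_def by auto
        ultimately have ab: "(vA, vB) \<in> snd Q" using sA unfolding shp_def by auto
        have vAQ: "vA \<in> fst Q" using sA AQ unfolding shp_def by auto
        have "vA \<in> B" using B vAQ ab sB unfolding is_downset_def shp_def by auto
        moreover have "vA \<noteq> uB" using sB ab unfolding shp_def by auto
        ultimately have "(vB, vA) \<in> snd Q" using sB unfolding shp_def by auto
        then show False using ab an False by (metis antisymD)
      qed
    qed
    then have "card (A \<inter> B) \<le> card {uA, uB}" by (intro card_mono) auto
    moreover have "card {uA, uB} \<le> 2" by (simp add: card_insert_if)
    ultimately have "card (A \<inter> B) \<le> 2" by linarith
    moreover have "card (A \<union> B) + card (A \<inter> B) = card A + card B" using card_Un_Int fA by metis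
    ultimately show ?thesis using A B by simp
  qed
qed



lemma ceil_half: "(i::nat) > m \<Longrightarrow> \<lceil>(real i - real m) / 2\<rceil> = int (i + 1 - (m + i + 2) div 2)"
proof -
  assume im: "i > m"
  obtain d where d: "i = m + d" using im le_Suc_ex less_imp_le_nat by blast
  show ?thesis
  proof (cases "even d")
    case True
    then obtain q where q: "d = 2 * q" by blast
    have "(real i - real m) / 2 = real q" using d q by simp
    moreover have "i + 1 - (m + i + 2) div 2 = q" using d q by simp
    ultimately show ?thesis by simp
  next
    case False
    then obtain q where q: "d = 2 * q + 1" using oddE by blast
    have h1: "(real i - real m) / 2 = real q + 1 / 2" using d q by simp
    have h3: "i + 1 - (m + i + 2) div 2 = q + 1" using d q by simp
    have h2: "\<lceil>real q + 1 / 2\<rceil> = int q + 1"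
      by (rule ceiling_unique) auto
    have "\<lceil>(real i - real m) / 2\<rceil> = int q + 1" by (simp only: h1 h2)
    then show ?thesis using h3 by simp
  qed
qed

context thm6 begin

lemma m_pos: "0 < m"
proof (rule ccontr)
  assume "\<not> 0 < m"
  then have "fst P0 = {}" "fst R0 = {}" using szP szR posP posR by (auto simp: psize_def is_poset_def)
  moreover have "snd P0 = {}" "snd R0 = {}" using calculation posP posR by (auto simp: is_poset_def)
  ultimately have "P0 = R0" by (metis prod.collapse)
  then show False using niso pos_iso_refl by blast
qed

lemma full_down: "is_downset (Z s) (fst (Z s))" "fst (Z s) \<noteq> {}"
proof -
  show "is_downset (Z s) (fst (Z s))" using Z_sub by (auto simp: is_downset_def)
  show "fst (Z s) \<noteq> {}" using card_Z[of s] m_pos by auto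
qed

lemma induced_full: "induced (Z s) (fst (Z s)) = Z s"
proof -
  have "snd (Z s) \<subseteq> fst (Z s) \<times> fst (Z s)" using Z_poset[of s] by (simp add: is_poset_def)
  then show ?thesis unfolding induced_def by (simp add: Int_absorb2)
qed

abbreviation A0 where "A0 s \<equiv> SP s (fst (Z s))"

lemma A0_eq: "A0 s = C s ` {..<i} \<union> E s ` fst (Z s) \<union> {C (\<not> s) 0}"
  unfolding SP_def card_Z by auto

lemma shp_A0: "shp PR (enc ` A0 s) (enc (C (\<not> s) 0)) (enc (C s 0))"
  unfolding shp_def
proof (intro conjI ballI impI)
  show "enc (C (\<not> s) 0) \<in> enc ` A0 s" "enc (C s 0) \<in> enc ` A0 s" using im unfolding A0_eq by auto
  show "enc (C (\<not> s) 0) \<noteq> enc (C s 0)" by simp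
next
  fix z assume z: "z \<in> enc ` A0 s" "z \<noteq> enc (C (\<not> s) 0)"
  then obtain a where a: "z = enc a" "a \<in> C s ` {..<i} \<union> E s ` fst (Z s)" unfolding A0_eq by auto
  show "(enc (C (\<not> s) 0), z) \<notin> snd PR" "(z, enc (C (\<not> s) 0)) \<notin> snd PR" "(enc (C s 0), z) \<in> snd PR"
    using a im by (auto simp: PR_snd')
qed

lemma A0_niso: "\<not> pos_iso (IPR (A0 False)) (IPR (A0 True))"
proof
  assume h: "pos_iso (IPR (A0 False)) (IPR (A0 True))"
  have c1: "core i (IPR (A0 False)) = IPR (E False ` fst (Z False))" by (rule core_SP[OF full_down(1)])
  have c2: "core i (IPR (A0 True)) = IPR (E True ` fst (Z True))" by (rule core_SP[OF full_down(1)])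
  have "pos_iso (core i (IPR (A0 False))) (core i (IPR (A0 True)))" by (rule core_iso[OF h])
  then have m: "pos_iso (IPR (E False ` fst (Z False))) (IPR (E True ` fst (Z True)))" by (simp only: c1 c2)
  have e1: "pos_iso (induced (Z False) (fst (Z False))) (IPR (E False ` fst (Z False)))" by (rule iso_E) simp
  have e2: "pos_iso (induced (Z True) (fst (Z True))) (IPR (E True ` fst (Z True)))" by (rule iso_E) simp
  have "pos_iso (induced (Z False) (fst (Z False))) (induced (Z True) (fst (Z True)))"
    by (rule pos_iso_trans[OF e1 pos_iso_trans[OF m pos_iso_sym[OF e2]]])
  then show False using niso induced_full[of False] induced_full[of True] by simp
qed

lemma noleast_PR: assumes "downE T" "card T = m + i + 1" shows "\<not> hasLeast (IPR T)"
proof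
  assume h: "hasLeast (IPR T)"
  have "C False 0 \<in> T \<and> C True 0 \<in> T"
    using down_enum[OF assms] im unfolding CC_def SP_def
  proof (elim disjE exE conjE)
    fix a assume "m + 1 \<le> a" "a \<le> i" "T = C False ` {..<a} \<union> C True ` {..<m + i + 1 - a}"
    then show ?thesis by auto
  next
    fix s D assume "is_downset (Z s) D" "T = C s ` {..<i} \<union> E s ` D \<union> C (\<not> s) ` {..<m + 1 - card D}"
    moreover have "card D \<le> m" using card_down calculation(1) .
    ultimately show ?thesis using im by (cases s) auto
  qed
  moreover obtain l where l: "l \<in> enc ` T" "\<forall>x\<in>enc ` T. (l, x) \<in> snd PR"
    using h unfolding hasLeast_def induced_def by auto
  ultimately obtain a where a: "l = enc a" "leE a (C False 0)" "leE a (C True 0)"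
    using PR_snd' by blast
  then show False by (cases a) auto
qed

lemma min_witness:
  assumes Q: "is_poset Q" and D: "Dn (m + i + 1) Q = Dn (m + i + 1) PR"
  shows "2 * m + 2 * i \<le> psize Q"
proof -
  let ?n = "m + i + 1"
  have get: "\<exists>A. is_downset Q A \<and> card A = ?n \<and> pos_iso (IPR (A0 s)) (induced Q A) \<and> (\<exists>u v. shp Q A u v)" for s
  proof -
    have "(s, fst (Z s)) \<in> IS" using full_down unfolding IS_def by auto
    then have "cls (A0 s) \<in> Dn ?n PR" unfolding Dn_PR Gsp_def by force
    then have "cls (A0 s) \<in> Dn ?n Q" using D by simp
    then obtain A where A: "cls (A0 s) = iso_class (induced Q A)" "is_downset Q A" "card A = ?n"
      unfolding Dn_def by blast
    have "pos_iso (induced Q A) (IPR (A0 s))"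
      using iso_class_eqD[OF A(1)[symmetric] IPR_poset[OF SP_downE[OF full_down(1)]]] .
    then have iso: "pos_iso (IPR (A0 s)) (induced Q A)" by (rule pos_iso_sym)
    then have "\<exists>u v. shp Q A u v" using shp_iso shp_A0 by blast
    then show ?thesis using A iso by blast
  qed
  obtain A uA vA where A: "is_downset Q A" "card A = ?n" "pos_iso (IPR (A0 False)) (induced Q A)" "shp Q A uA vA"
    using get[of False] by blast
  obtain B uB vB where B: "is_downset Q B" "card B = ?n" "pos_iso (IPR (A0 True)) (induced Q B)" "shp Q B uB vB"
    using get[of True] by blast
  have ni: "\<not> pos_iso (induced Q A) (induced Q B)"
  proof
    assume "pos_iso (induced Q A) (induced Q B)"
    then have "pos_iso (IPR (A0 False)) (IPR (A0 True))"
      using A(3) B(3) pos_iso_trans pos_iso_sym by metis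
    then show False using A0_niso by blast
  qed
  have nl: "\<not> hasLeast (induced Q T)" if T: "is_downset Q T" "card T = ?n" for T
  proof
    assume hl: "hasLeast (induced Q T)"
    have "T \<noteq> {}" using T by auto
    then have "iso_class (induced Q T) \<in> Dn ?n PR" using D T unfolding Dn_def by blast
    then obtain S where S: "iso_class (induced Q T) = iso_class (induced PR S)" "is_downset PR S" "card S = ?n"
      unfolding Dn_def by blast
    let ?T = "enc -` S"
    have TT: "S = enc ` ?T" "downE ?T" using S(2) downset_PR_iff by blast+
    have cT: "card ?T = ?n" using S(3) TT(1) card_enc by metis
    have "pos_iso (induced Q T) (IPR ?T)"
      using iso_class_eqD S(1) TT IPR_poset by metis
    then have "hasLeast (IPR ?T)" using hl hasLeast_iso by blast
    then show False using noleast_PR[OF TT(2) cT] by blast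
  qed
  have "2 * ?n - 2 \<le> card (A \<union> B)"
    using union_bound[OF Q A(1,2) B(1,2) A(4) B(4) ni nl] .
  moreover have "card (A \<union> B) \<le> psize Q"
    unfolding psize_def using A(1) B(1) Q by (intro card_mono) (auto simp: is_downset_def is_poset_def)
  ultimately show ?thesis by simp
qed

lemma sizes: "\<forall>X\<in>Dn (m + i + 1) PR. \<forall>Q\<in>X. psize Q = m + i + 1"
proof (intro ballI)
  fix X Q assume X: "X \<in> Dn (m + i + 1) PR" and Q: "Q \<in> X"
  then obtain S where "X = iso_class (induced PR S)" "card S = m + i + 1" unfolding Dn_def by blast
  then have "pos_iso (induced PR S) Q" using Q unfolding iso_class_def by auto
  then have "psize (induced PR S) = psize Q" by (rule psize_iso)
  then show "psize Q = m + i + 1" using \<open>card S = m + i + 1\<close> by (simp add: psize_def induced_def)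
qed

lemma card_Gamma: "card (Dn (m + i + 1) PR) = Cconst P0 R0 + (i + 1 - (m + i + 2) div 2)"
proof -
  have fD: "finite (Dsets P0)" "finite (Dsets R0)" using finite_Dsets posP posR by auto
  have "IS \<subseteq> UNIV \<times> Pow (fst P0 \<union> fst R0)"
    unfolding IS_def is_downset_def Z_def by (auto split: if_splits)
  moreover have "finite ((UNIV :: bool set) \<times> Pow (fst P0 \<union> fst R0))"
    using posP posR by (intro finite_cartesian_product) (auto simp: is_poset_def UNIV_bool)
  ultimately have "finite IS" by (rule finite_subset)
  then have fin: "finite Gcc" "finite Gsp" unfolding Gcc_def Gsp_def by simp_all
  have "card (Dn (m + i + 1) PR) = card Gcc + card Gsp"
    unfolding Dn_PR using fin Gcc_Gsp_disj by (simp add: card_Un_disjoint)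
  moreover have "card Gsp = Cconst P0 R0"
    unfolding card_Gsp Cconst_def using card_Un_Int[OF fD] by simp
  ultimately show ?thesis using card_Gcc by simp
qed

end

theorem mainTheorem6:
  fixes P0 R0 :: npos and m i :: nat
  assumes "is_poset P0" and "is_poset R0" and "\<not> pos_iso P0 R0"
    and "psize P0 = m" and "psize R0 = m" and "i > m"
  shows "let PR = disj_union (above_chain P0 i) (above_chain R0 i);
             n = m + i + 1;
             \<Gamma> = Dn n PR;
             k = Cconst P0 R0 + nat \<lceil>(real i - real m) / 2\<rceil>
         in is_covtree_node n \<Gamma>
            \<and> (\<forall>X\<in>\<Gamma>. \<forall>Q\<in>X. psize Q = n)
            \<and> card \<Gamma> = k
            \<and> is_witness n \<Gamma> PR
            \<and> (\<forall>Q. is_witness n \<Gamma> Q \<longrightarrow> psize PR \<le> psize Q)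
            \<and> psize PR = 2 * m + 2 * i
            \<and> (\<forall>c::real. real i - of_int \<lceil>(real i - real m) / 2\<rceil>
                          > 1 + real (Cconst P0 R0) - real m + c
                 \<longrightarrow> real (psize PR) > real n + real k + c)"
proof -
  interpret T: thm6 P0 R0 m i using assms by unfold_locales
  have PRe: "disj_union (above_chain P0 i) (above_chain R0 i) = T.PR" by (simp add: T.PR_def)
  have ce: "\<lceil>(real i - real m) / 2\<rceil> = int (i + 1 - (m + i + 2) div 2)" using ceil_half assms(6) .
  let ?k = "i + 1 - (m + i + 2) div 2"
  have w: "is_witness (m + i + 1) (Dn (m + i + 1) T.PR) T.PR"
    unfolding is_witness_def using T.PR_poset by simp
  have "is_covtree_node (m + i + 1) (Dn (m + i + 1) T.PR)"
    unfolding is_covtree_node_def using w by blast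
  moreover have "\<forall>X\<in>Dn (m + i + 1) T.PR. \<forall>Q\<in>X. psize Q = m + i + 1" by (rule T.sizes)
  moreover have "card (Dn (m + i + 1) T.PR) = Cconst P0 R0 + nat \<lceil>(real i - real m) / 2\<rceil>"
    using T.card_Gamma ce by simp
  moreover have "\<forall>Q. is_witness (m + i + 1) (Dn (m + i + 1) T.PR) Q \<longrightarrow> psize T.PR \<le> psize Q"
    using T.min_witness T.psize_PR unfolding is_witness_def by auto
  moreover have "\<forall>c::real. real i - of_int \<lceil>(real i - real m) / 2\<rceil>
                          > 1 + real (Cconst P0 R0) - real m + c
                 \<longrightarrow> real (psize T.PR) > real (m + i + 1) + real (Cconst P0 R0 + nat \<lceil>(real i - real m) / 2\<rceil>) + c"
    using T.psize_PR ce by auto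
  ultimately show ?thesis unfolding Let_def PRe using w T.psize_PR by blast
qed


end
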